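(* Assume $d(\eta,\cdot)$ attains its minimum over $\mathcal G$ at $g^*=g^{(\theta^* )}$ for some $\theta^*\in\mathbb{R}^m$, and let $g^{bf}$ be the maximum-entropy element of $P$. Then $$d(\eta,g^{bf})-d(\eta,g^* )\le 2\,\epsilon\cdot|\theta^*|\le 2\|\epsilon\|_\infty\|\theta^*\|_1 .$$ If moreover $g^{bf}\in\mathcal G$, the left-hand side equals $d(g^*,g^{bf})$, so $d(g^*,g^{bf})\le 2\epsilon\cdot|\theta^*|=O(\|\epsilon\|_\infty)$.
   Context: Standard setup. Let $n\ge1$, $k\ge2$, $p\ge1$ be integers and $m=p+k$. There are $n$ data points $x_1,\dots,x_n$ and $p$ rules $h^{(1)},\dots,h^{(p)}$, each a map from $\{x_1,\dots,x_n\}$ to $\{1,\dots,k\}\cup\{?\}$, where "?" means abstain. Let $n_j\ge1$ be the number of indices $i$ with $h^{(j)}(x_i)\neq ?$. $\Delta_k$ denotes the probability simplex in $\mathbb{R}^k$; an element $z\in\Delta_k^n\subset\mathbb{R}^{nk}$ is written $z=(z_1,\dots,z_n)$ with $z_i=(z_{i1},\dots,z_{ik})\in\Delta_k$. For $j\le p$ let $h^{(j)}\in\{0,1\}^{nk}$ also denote the vector with $h^{(j)}_{i\ell}=1$ iff $h^{(j)}(x_i)=\ell$; for $\ell\le k$ let $\vec e^{\,n}_\ell\in\{0,1\}^{nk}$ have entries $(\vec e^{\,n}_\ell)_{i\ell'}=\mathbf 1(\ell'=\ell)$. The matrix $A\in\mathbb{R}^{m\times nk}$ has rows $a^{(j)}=h^{(j)}/n_j$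 for $1\le j\le p$ and $a^{(p+\ell)}=\vec e^{\,n}_\ell/n$ for $1\le\ell\le k$. For $\theta\in\mathbb{R}^m$ put $a^{(\theta)}=A^\top\theta\in\mathbb{R}^{nk}$ (entries $a^{(\theta)}_{i\ell}$) and define $g^{(\theta)}\in\Delta_k^n$ by $g^{(\theta)}_{i\ell}=\exp(a^{(\theta)}_{i\ell})/\sum_{\ell'=1}^k\exp(a^{(\theta)}_{i\ell'})$; let $\mathcal G=\{g^{(\theta)}:\theta\in\mathbb{R}^m\}$. A fixed "true labeling" $\eta\in\Delta_k^n$ is given and $b^*:=A\eta\in\mathbb{R}^m$. Given $b\in\mathbb{R}^m$ and $\epsilon\in\mathbb{R}^m$ with $\epsilon\ge0$ and $b-\epsilon\le b^*\le b+\epsilon$ (entrywise), let $P=\{z\in\Delta_k^n:\ b-\epsilon\le Az\le b+\epsilon\}$ (entrywise). The maximum-entropy element of $P$ is the unique minimizer of $\sum_{i,\ell}z_{i\ell}\log z_{i\ell}$ over $P$ (with $0\log0=0$). For $\mu,\nu\in\Delta_k^n$, $d(\mu,\nu)=\sum_{i=1}^n\mathrm{KL}(\mu_i\|\nu_i)=\sum_{i,\ell}\mu_{i\ell}\log(\mu_{i\ell}/\nu_{i\ell})$, with $0\log(0/x)=0$. $|\theta|$ is the entrywise absolute value. *)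

theory Defs
  imports "HOL-Analysis.Analysis"
begin

(* Indexing conventions (1-based, as in the paper):
   data points i \<in> {1..n}, labels l \<in> {1..k}, rules j \<in> {1..p},
   rows of A indexed by j \<in> {1..p+k}.
   A rule h j :: nat \<Rightarrow> nat option; h j i = None means abstain ("?"),
   h j i = Some l means label l.
   Elements of \<Delta>_k^n are functions z :: nat \<Rightarrow> nat \<Rightarrow> real, z i l = z_{il}. *)

definition nrule :: "nat \<Rightarrow> (nat \<Rightarrow> nat \<Rightarrow> nat option) \<Rightarrow> nat \<Rightarrow> nat" where
  "nrule n h j = card {i \<in> {1..n}. h j i \<noteq> None}"

definition Amat :: "nat \<Rightarrow> nat \<Rightarrow> (nat \<Rightarrow> nat \<Rightarrow> nat option) \<Rightarrow> nat \<Rightarrow> nat \<Rightarrow> nat \<Rightarrow> real" where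
  "Amat n p h j i l =
     (if j \<le> p then (if h j i = Some l then 1 else 0) / real (nrule n h j)
      else (if l = j - p then 1 else 0) / real n)"

definition Aop :: "nat \<Rightarrow> nat \<Rightarrow> nat \<Rightarrow> (nat \<Rightarrow> nat \<Rightarrow> nat option)
                    \<Rightarrow> (nat \<Rightarrow> nat \<Rightarrow> real) \<Rightarrow> nat \<Rightarrow> real" where
  "Aop n k p h z j = (\<Sum>i=1..n. \<Sum>l=1..k. Amat n p h j i l * z i l)"

definition atheta :: "nat \<Rightarrow> nat \<Rightarrow> nat \<Rightarrow> (nat \<Rightarrow> nat \<Rightarrow> nat option)
                    \<Rightarrow> (nat \<Rightarrow> real) \<Rightarrow> nat \<Rightarrow> nat \<Rightarrow> real" where
  "atheta n k p h \<theta> i l = (\<Sum>j=1..p+k. Amat n p h j i l * \<theta> j)"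

definition gtheta :: "nat \<Rightarrow> nat \<Rightarrow> nat \<Rightarrow> (nat \<Rightarrow> nat \<Rightarrow> nat option)
                    \<Rightarrow> (nat \<Rightarrow> real) \<Rightarrow> nat \<Rightarrow> nat \<Rightarrow> real" where
  "gtheta n k p h \<theta> i l =
     exp (atheta n k p h \<theta> i l) / (\<Sum>l'=1..k. exp (atheta n k p h \<theta> i l'))"

definition simplex_prod :: "nat \<Rightarrow> nat \<Rightarrow> (nat \<Rightarrow> nat \<Rightarrow> real) \<Rightarrow> bool" where
  "simplex_prod n k z \<longleftrightarrow>
     (\<forall>i\<in>{1..n}. (\<forall>l\<in>{1..k}. 0 \<le> z i l) \<and> (\<Sum>l=1..k. z i l) = 1)"

(* membership in the family \<G>, compared on the index domain *)
definition in_G :: "nat \<Rightarrow> nat \<Rightarrow> nat \<Rightarrow> (nat \<Rightarrow> nat \<Rightarrow> nat option)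
                    \<Rightarrow> (nat \<Rightarrow> nat \<Rightarrow> real) \<Rightarrow> bool" where
  "in_G n k p h z \<longleftrightarrow> (\<exists>\<theta>. \<forall>i\<in>{1..n}. \<forall>l\<in>{1..k}. z i l = gtheta n k p h \<theta> i l)"

definition polyP :: "nat \<Rightarrow> nat \<Rightarrow> nat \<Rightarrow> (nat \<Rightarrow> nat \<Rightarrow> nat option)
                    \<Rightarrow> (nat \<Rightarrow> real) \<Rightarrow> (nat \<Rightarrow> real) \<Rightarrow> (nat \<Rightarrow> nat \<Rightarrow> real) set" where
  "polyP n k p h b \<epsilon> =
     {z. simplex_prod n k z \<and>
         (\<forall>j\<in>{1..p+k}. b j - \<epsilon> j \<le> Aop n k p h z j \<and> Aop n k p h z j \<le> b j + \<epsilon> j)}"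

definition negent :: "nat \<Rightarrow> nat \<Rightarrow> (nat \<Rightarrow> nat \<Rightarrow> real) \<Rightarrow> real" where
  "negent n k z = (\<Sum>i=1..n. \<Sum>l=1..k. if z i l = 0 then 0 else z i l * ln (z i l))"

definition is_maxent :: "nat \<Rightarrow> nat \<Rightarrow> (nat \<Rightarrow> nat \<Rightarrow> real) set \<Rightarrow> (nat \<Rightarrow> nat \<Rightarrow> real) \<Rightarrow> bool" where
  "is_maxent n k S z \<longleftrightarrow> z \<in> S \<and> (\<forall>w\<in>S. negent n k z \<le> negent n k w)"

definition KLd :: "nat \<Rightarrow> nat \<Rightarrow> (nat \<Rightarrow> nat \<Rightarrow> real) \<Rightarrow> (nat \<Rightarrow> nat \<Rightarrow> real) \<Rightarrow> real" where
  "KLd n k \<mu> \<nu> = (\<Sum>i=1..n. \<Sum>l=1..k. if \<mu> i l = 0 then 0 else \<mu> i l * ln (\<mu> i l / \<nu> i l))"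

end

theory Submission imports Defs begin

definition phi :: "real \<Rightarrow> real" where "phi x = (if x = 0 then 0 else x * ln x)"

lemma phi_ge:
  assumes x: "0 \<le> x" and y: "0 < y"
  shows "x * ln y + x - y \<le> phi x"
proof (cases "x = 0")
  case True thus ?thesis using y by (simp add: phi_def)
next
  case False
  then have x: "0 < x" using x by simp
  have "ln (y/x) \<le> y/x - 1" by (rule ln_le_minus_one) (simp add: x y)
  then have "ln y - ln x \<le> y/x - 1" using ln_div x y by simp
  then have "x*(ln y - ln x) \<le> x*(y/x - 1)" using x by (simp add: mult_left_mono)
  also have "x*(y/x - 1) = y - x" using x by (simp add: field_simps)
  finally show ?thesis using x False by (simp add: phi_def algebra_simps)
qed

lemma phi_diff:
  assumes x: "0 \<le> x" and y: "0 \<le> y" and yx: "y = 0 \<Longrightarrow> x = 0"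
  shows "phi y - phi x \<le> (y - x) * (ln y + 1)"
proof (cases "y = 0")
  case True thus ?thesis using yx by (simp add: phi_def)
next
  case False
  then have y: "0 < y" using y by simp
  have "x * ln y + x - y \<le> phi x" by (rule phi_ge[OF x y])
  thus ?thesis using y by (simp add: phi_def algebra_simps)
qed

lemma maxent_var:
  fixes g e :: "nat \<Rightarrow> nat \<Rightarrow> real" and I L :: "nat set"
  assumes fI: "finite I" and fL: "finite L"
    and g0: "\<forall>i\<in>I. \<forall>l\<in>L. 0 \<le> g i l" and e0: "\<forall>i\<in>I. \<forall>l\<in>L. 0 \<le> e i l"
    and sums: "(\<Sum>i\<in>I. \<Sum>l\<in>L. g i l) = (\<Sum>i\<in>I. \<Sum>l\<in>L. e i l)"
    and opt: "\<And>t. 0 < t \<Longrightarrow> t < 1 \<Longrightarrow> (\<Sum>i\<in>I. \<Sum>l\<in>L. phi (g i l))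
                 \<le> (\<Sum>i\<in>I. \<Sum>l\<in>L. phi ((1-t)*g i l + t*e i l))"
  shows "(\<forall>i\<in>I. \<forall>l\<in>L. 0 < e i l \<longrightarrow> 0 < g i l) \<and>
         (\<Sum>i\<in>I. \<Sum>l\<in>L. phi (g i l)) \<le> (\<Sum>i\<in>I. \<Sum>l\<in>L. if g i l = 0 then 0 else e i l * ln (g i l))"
proof -
  define z where "z t i l = (1-t)*g i l + t*e i l" for t i l
  define F where "F t = (\<Sum>i\<in>I. \<Sum>l\<in>L. (e i l - g i l) * ln (z t i l))" for t
  have Fnn: "0 \<le> F t" if t: "0 < t" "t < 1" for t
  proof -
    have hterm: "phi (z t i l) - phi (g i l) \<le> t * ((e i l - g i l) * ln (z t i l)) + t * (e i l - g i l)"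
      if "i \<in> I" "l \<in> L" for i l
    proof -
      have gi: "0 \<le> g i l" "0 \<le> e i l" using g0 e0 that by auto
      have zi: "0 \<le> z t i l" using gi t by (simp add: z_def)
      have zg: "z t i l = 0 \<Longrightarrow> g i l = 0"
      proof -
        assume "z t i l = 0"
        moreover have "0 \<le> (1-t)*g i l" "0 \<le> t * e i l" using gi t by auto
        ultimately have "(1-t)*g i l = 0" unfolding z_def by linarith
        thus ?thesis using t by simp
      qed
      have "phi (z t i l) - phi (g i l) \<le> (z t i l - g i l) * (ln (z t i l) + 1)"
        by (rule phi_diff[OF gi(1) zi zg])
      also have "\<dots> = t * ((e i l - g i l) * ln (z t i l)) + t * (e i l - g i l)"
        by (simp add: z_def algebra_simps)
      finally show ?thesis .
    qed
    have "0 \<le> (\<Sum>i\<in>I. \<Sum>l\<in>L. phi (z t i l)) - (\<Sum>i\<in>I. \<Sum>l\<in>L. phi (g i l))"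
      using opt[OF t] by (simp add: z_def)
    also have "\<dots> = (\<Sum>i\<in>I. \<Sum>l\<in>L. phi (z t i l) - phi (g i l))"
      by (simp add: sum_subtractf)
    also have "\<dots> \<le> (\<Sum>i\<in>I. \<Sum>l\<in>L. t * ((e i l - g i l) * ln (z t i l)) + t * (e i l - g i l))"
      by (intro sum_mono) (use hterm in auto)
    also have "\<dots> = t * F t + t * ((\<Sum>i\<in>I. \<Sum>l\<in>L. e i l) - (\<Sum>i\<in>I. \<Sum>l\<in>L. g i l))"
    proof -
      have "(\<Sum>i\<in>I. \<Sum>l\<in>L. t * (e i l - g i l)) = t * ((\<Sum>i\<in>I. \<Sum>l\<in>L. e i l) - (\<Sum>i\<in>I. \<Sum>l\<in>L. g i l))"
        by (simp only: sum_subtractf[symmetric] sum_distrib_left[symmetric])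
      moreover have "(\<Sum>i\<in>I. \<Sum>l\<in>L. t * ((e i l - g i l) * ln (z t i l))) = t * F t"
        by (simp only: F_def sum_distrib_left)
      ultimately show ?thesis by (simp only: sum.distrib)
    qed
    also have "\<dots> = t * F t" using sums by simp
    finally show ?thesis using t by (simp add: zero_le_mult_iff)
  qed
  define A where "A t = (\<Sum>i\<in>I. \<Sum>l\<in>L. if 0 < g i l then (e i l - g i l) * ln (z t i l) else 0)" for t
  define A0 where "A0 = (\<Sum>i\<in>I. \<Sum>l\<in>L. if 0 < g i l then (e i l - g i l) * ln (g i l) else 0)"
  define c1 where "c1 = (\<Sum>i\<in>I. \<Sum>l\<in>L. if g i l = 0 then e i l else 0)"
  define c2 where "c2 = (\<Sum>i\<in>I. \<Sum>l\<in>L. if g i l = 0 then e i l * ln (e i l) else 0)"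
  have Fsplit: "F t = A t + c1 * ln t + c2" if t: "0 < t" for t
  proof -
    have "F t = (\<Sum>i\<in>I. \<Sum>l\<in>L. (if 0 < g i l then (e i l - g i l) * ln (z t i l) else 0)
               + (if g i l = 0 then e i l else 0) * ln t + (if g i l = 0 then e i l * ln (e i l) else 0))"
      unfolding F_def
    proof (intro sum.cong refl)
      fix i l assume il: "i \<in> I" "l \<in> L"
      have gi: "0 \<le> g i l" "0 \<le> e i l" using g0 e0 il by auto
      show "(e i l - g i l) * ln (z t i l) = (if 0 < g i l then (e i l - g i l) * ln (z t i l) else 0)
               + (if g i l = 0 then e i l else 0) * ln t + (if g i l = 0 then e i l * ln (e i l) else 0)"
      proof (cases "0 < g i l")
        case True thus ?thesis by simp
      next
        case False
        then have g: "g i l = 0" using gi by simp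
        show ?thesis
        proof (cases "e i l = 0")
          case True thus ?thesis using g by (simp add: z_def)
        next
          case False
          then have "0 < e i l" using gi by simp
          thus ?thesis using g t by (simp add: z_def ln_mult algebra_simps)
        qed
      qed
    qed
    also have "\<dots> = A t + c1 * ln t + c2"
    proof -
      have e1: "(\<Sum>i\<in>I. \<Sum>l\<in>L. (if g i l = 0 then e i l else 0) * ln t) = c1 * ln t"
        by (simp add: c1_def sum_distrib_right)
      show ?thesis unfolding A_def c2_def e1[symmetric] by (simp add: sum.distrib)
    qed
    finally show ?thesis .
  qed
  have Alim: "(A \<longlongrightarrow> A0) (at_right 0)"
    unfolding A_def A0_def
  proof (intro tendsto_sum)
    fix i l assume il: "i \<in> I" "l \<in> L"
    show "((\<lambda>t. if 0 < g i l then (e i l - g i l) * ln (z t i l) else 0) \<longlongrightarrow>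
          (if 0 < g i l then (e i l - g i l) * ln (g i l) else 0)) (at_right 0)"
    proof (cases "0 < g i l")
      case True
      have "((\<lambda>t. z t i l) \<longlongrightarrow> (1 - 0) * g i l + 0 * e i l) (at_right 0)"
        unfolding z_def by (intro tendsto_intros)
      then have "((\<lambda>t. z t i l) \<longlongrightarrow> g i l) (at_right 0)" by simp
      then have "((\<lambda>t. ln (z t i l)) \<longlongrightarrow> ln (g i l)) (at_right 0)"
        using True by (intro tendsto_ln) auto
      then show ?thesis using True by (simp add: tendsto_mult_left)
    qed simp
  qed
  have ev: "eventually (\<lambda>t. 0 < t \<and> t < 1) (at_right (0::real))"
    by (auto simp: eventually_at_right_field intro: exI[of _ 1])
  have c1nn: "0 \<le> c1" unfolding c1_def using e0 by (auto intro!: sum_nonneg)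
  have c1z: "c1 = 0"
  proof (rule ccontr)
    assume "c1 \<noteq> 0"
    then have c1p: "0 < c1" using c1nn by simp
    have "LIM t at_right 0. c1 * ln t :> at_bot"
      by (rule filterlim_tendsto_pos_mult_at_bot[OF tendsto_const c1p ln_at_0])
    then have "LIM t at_right 0. (A t + c2) + c1 * ln t :> at_bot"
      by (rule filterlim_tendsto_add_at_bot_iff[OF tendsto_add[OF Alim tendsto_const], THEN iffD2])
    then have "eventually (\<lambda>t. (A t + c2) + c1 * ln t \<le> -1) (at_right 0)"
      by (simp add: filterlim_at_bot)
    moreover note ev
    ultimately have "eventually (\<lambda>t. False) (at_right (0::real))"
    proof (rule eventually_elim2)
      fix t :: real assume "A t + c2 + c1 * ln t \<le> -1" "0 < t \<and> t < 1"
      thus False using Fnn[of t] Fsplit[of t] by simp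
    qed
    thus False by simp
  qed
  have ge: "\<forall>i\<in>I. \<forall>l\<in>L. g i l = 0 \<longrightarrow> e i l = 0"
  proof -
    have inn: "\<forall>i\<in>I. 0 \<le> (\<Sum>l\<in>L. if g i l = 0 then e i l else 0)"
      using e0 by (auto intro!: sum_nonneg)
    have zi0: "\<forall>i\<in>I. (\<Sum>l\<in>L. if g i l = 0 then e i l else 0) = 0"
      using c1z sum_nonneg_eq_0_iff[OF fI, of "\<lambda>i. \<Sum>l\<in>L. if g i l = 0 then e i l else 0"] inn
      unfolding c1_def by simp
    have zi:  "\<forall>i\<in>I. \<forall>l\<in>L. (if g i l = 0 then e i l else 0) = 0"
    proof (intro ballI)
      fix i l assume i: "i\<in>I" and l: "l\<in>L"
      have "\<forall>l\<in>L. 0 \<le> (if g i l = 0 then e i l else 0)" using e0 i by auto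
      thus "(if g i l = 0 then e i l else 0) = 0"
        using sum_nonneg_eq_0_iff[OF fL, of "\<lambda>l. if g i l = 0 then e i l else 0"] zi0 i l by simp
    qed
    show ?thesis
    proof (intro ballI impI)
      fix i l assume "i \<in> I" "l \<in> L" "g i l = 0"
      thus "e i l = 0" using zi by metis
    qed
  qed
  have c2z: "c2 = 0" unfolding c2_def using ge by (auto intro!: sum.neutral)
  have "(F \<longlongrightarrow> A0) (at_right 0)"
  proof (rule Lim_transform_eventually[OF Alim])
    show "eventually (\<lambda>t. A t = F t) (at_right 0)"
      using ev by eventually_elim (simp add: Fsplit c1z c2z)
  qed
  then have A0nn: "0 \<le> A0"
    by (rule tendsto_lowerbound) (use ev Fnn in \<open>auto elim: eventually_mono\<close>)
  have "(\<Sum>i\<in>I. \<Sum>l\<in>L. if g i l = 0 then 0 else e i l * ln (g i l))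
        = (\<Sum>i\<in>I. \<Sum>l\<in>L. phi (g i l) + (if 0 < g i l then (e i l - g i l) * ln (g i l) else 0))"
  proof (intro sum.cong refl)
    fix i l assume "i \<in> I" "l \<in> L"
    then have "0 \<le> g i l" using g0 by auto
    thus "(if g i l = 0 then 0 else e i l * ln (g i l)) = phi (g i l) + (if 0 < g i l then (e i l - g i l) * ln (g i l) else 0)"
      by (cases "g i l = 0") (simp_all add: phi_def left_diff_distrib)
  qed
  also have "\<dots> = (\<Sum>i\<in>I. \<Sum>l\<in>L. phi (g i l)) + A0"
    unfolding A0_def by (simp add: sum.distrib)
  finally have "(\<Sum>i\<in>I. \<Sum>l\<in>L. if g i l = 0 then 0 else e i l * ln (g i l)) - (\<Sum>i\<in>I. \<Sum>l\<in>L. phi (g i l)) = A0"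
    by simp
  moreover have "\<forall>i\<in>I. \<forall>l\<in>L. 0 < e i l \<longrightarrow> 0 < g i l"
    using ge g0 by force
  ultimately show ?thesis using A0nn by simp
qed


lemma Zpos: assumes "1 \<le> k" shows "0 < (\<Sum>l=1..k. exp (atheta n k p h \<theta> i l))"
  using assms by (intro sum_pos) auto

lemma G_pos: "1 \<le> k \<Longrightarrow> 0 < gtheta n k p h \<theta> i l"
  unfolding gtheta_def using Zpos by (simp add: divide_pos_pos)

lemma G_ln: "1 \<le> k \<Longrightarrow> ln (gtheta n k p h \<theta> i l) = atheta n k p h \<theta> i l - ln (\<Sum>l'=1..k. exp (atheta n k p h \<theta> i l'))"
  unfolding gtheta_def using Zpos[of k n p h \<theta> i] by (simp add: ln_div)

lemma G_sum: "1 \<le> k \<Longrightarrow> (\<Sum>l=1..k. gtheta n k p h \<theta> i l) = 1"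
  unfolding gtheta_def using Zpos[of k n p h \<theta> i] by (simp add: sum_divide_distrib[symmetric])

lemma swapA: "(\<Sum>i=1..n. \<Sum>l=1..k. atheta n k p h \<theta> i l * z i l) = (\<Sum>j=1..p+k. \<theta> j * Aop n k p h z j)"
proof -
  have "(\<Sum>i=1..n. \<Sum>l=1..k. atheta n k p h \<theta> i l * z i l)
      = (\<Sum>i=1..n. \<Sum>l=1..k. \<Sum>j=1..p+k. \<theta> j * (Amat n p h j i l * z i l))"
    unfolding atheta_def sum_distrib_right by (simp add: mult_ac)
  also have "\<dots> = (\<Sum>i=1..n. \<Sum>j=1..p+k. \<Sum>l=1..k. \<theta> j * (Amat n p h j i l * z i l))"
    by (rule sum.cong[OF refl], rule sum.swap)
  also have "\<dots> = (\<Sum>j=1..p+k. \<Sum>i=1..n. \<Sum>l=1..k. \<theta> j * (Amat n p h j i l * z i l))"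
    by (rule sum.swap)
  also have "\<dots> = (\<Sum>j=1..p+k. \<theta> j * Aop n k p h z j)"
    by (simp add: Aop_def sum_distrib_left)
  finally show ?thesis .
qed

lemma Aop_lin: "Aop n k p h (\<lambda>i l. (1-t) * g i l + t * e i l) j = (1-t) * Aop n k p h g j + t * Aop n k p h e j"
  unfolding Aop_def by (simp add: sum.distrib sum_distrib_left distrib_left mult.left_commute)

lemma conv:
  fixes lo hi x y t :: real
  assumes "lo \<le> x" "x \<le> hi" "lo \<le> y" "y \<le> hi" "0 \<le> t" "t \<le> 1"
  shows "lo \<le> (1-t)*x + t*y \<and> (1-t)*x + t*y \<le> hi"
proof -
  have "(1-t)*lo \<le> (1-t)*x" "t*lo \<le> t*y" "(1-t)*x \<le> (1-t)*hi" "t*y \<le> t*hi"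
    using assms by (auto intro: mult_left_mono)
  moreover have "(1-t)*lo + t*lo = lo" "(1-t)*hi + t*hi = hi" by (simp_all add: algebra_simps)
  ultimately show ?thesis by linarith
qed

lemma negent_phi: "negent n k z = (\<Sum>i=1..n. \<Sum>l=1..k. phi (z i l))"
  by (simp add: negent_def phi_def)

lemma KL_split:
  assumes "\<forall>i\<in>{1..n}. \<forall>l\<in>{1..k}. 0 \<le> \<mu> i l \<and> (0 < \<mu> i l \<longrightarrow> 0 < \<nu> i l)"
  shows "KLd n k \<mu> \<nu> = (\<Sum>i=1..n. \<Sum>l=1..k. phi (\<mu> i l))
           - (\<Sum>i=1..n. \<Sum>l=1..k. if \<mu> i l = 0 then 0 else \<mu> i l * ln (\<nu> i l))"
proof -
  have "KLd n k \<mu> \<nu> = (\<Sum>i=1..n. \<Sum>l=1..k. phi (\<mu> i l) - (if \<mu> i l = 0 then 0 else \<mu> i l * ln (\<nu> i l)))"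
    unfolding KLd_def
  proof (intro sum.cong refl)
    fix i l assume il: "i \<in> {1..n}" "l \<in> {1..k}"
    show "(if \<mu> i l = 0 then 0 else \<mu> i l * ln (\<mu> i l / \<nu> i l)) =
          phi (\<mu> i l) - (if \<mu> i l = 0 then 0 else \<mu> i l * ln (\<nu> i l))"
    proof (cases "\<mu> i l = 0")
      case False
      then have "0 < \<mu> i l" "0 < \<nu> i l" using assms il by force+
      thus ?thesis using False by (simp add: phi_def ln_div right_diff_distrib)
    qed (simp add: phi_def)
  qed
  thus ?thesis by (simp add: sum_subtractf)
qed

lemma wsum:
  fixes w a :: "nat \<Rightarrow> real"
  assumes "(\<Sum>l\<in>L. w l) = 1"
  shows "(\<Sum>l\<in>L. w l * (a l - c)) = (\<Sum>l\<in>L. a l * w l) - c"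
proof -
  have "(\<Sum>l\<in>L. w l * (a l - c)) = (\<Sum>l\<in>L. a l * w l - c * w l)"
    by (intro sum.cong refl) (simp add: algebra_simps)
  also have "\<dots> = (\<Sum>l\<in>L. a l * w l) - c * (\<Sum>l\<in>L. w l)"
    by (simp add: sum_subtractf sum_distrib_left)
  finally show ?thesis using assms by simp
qed


lemma KL_G:
  assumes k1: "1 \<le> k" and e0: "\<forall>i\<in>{1..n}. \<forall>l\<in>{1..k}. 0 \<le> e i l"
    and esum: "\<forall>i\<in>{1..n}. (\<Sum>l=1..k. e i l) = 1"
  shows "KLd n k e (gtheta n k p h \<theta>) = (\<Sum>i=1..n. \<Sum>l=1..k. phi (e i l))
          - (\<Sum>i=1..n. \<Sum>l=1..k. atheta n k p h \<theta> i l * e i l)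
          + (\<Sum>i=1..n. ln (\<Sum>l=1..k. exp (atheta n k p h \<theta> i l)))"
proof -
  have "KLd n k e (gtheta n k p h \<theta>) = (\<Sum>i=1..n. \<Sum>l=1..k. phi (e i l))
           - (\<Sum>i=1..n. \<Sum>l=1..k. if e i l = 0 then 0 else e i l * ln (gtheta n k p h \<theta> i l))"
    using e0 G_pos[OF k1] by (intro KL_split) auto
  also have "(\<Sum>i=1..n. \<Sum>l=1..k. if e i l = 0 then 0 else e i l * ln (gtheta n k p h \<theta> i l))
     = (\<Sum>i=1..n. \<Sum>l=1..k. e i l * (atheta n k p h \<theta> i l - ln (\<Sum>l'=1..k. exp (atheta n k p h \<theta> i l'))))"
    by (intro sum.cong refl) (simp add: G_ln[OF k1])
  also have "\<dots> = (\<Sum>i=1..n. (\<Sum>l=1..k. atheta n k p h \<theta> i l * e i l) - ln (\<Sum>l'=1..k. exp (atheta n k p h \<theta> i l')))"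
    by (rule sum.cong[OF refl], rule wsum) (use esum in auto)
  also have "\<dots> = (\<Sum>i=1..n. \<Sum>l=1..k. atheta n k p h \<theta> i l * e i l) - (\<Sum>i=1..n. ln (\<Sum>l=1..k. exp (atheta n k p h \<theta> i l)))"
    by (simp add: sum_subtractf)
  finally show ?thesis by simp
qed

lemma alin: "atheta n k p h (\<lambda>j. \<theta> j + s * v j) i l = atheta n k p h \<theta> i l + s * atheta n k p h v i l"
  unfolding atheta_def by (simp add: sum.distrib sum_distrib_left distrib_left mult.left_commute)

lemma moment:
  assumes k1: "1 \<le> k" and e0: "\<forall>i\<in>{1..n}. \<forall>l\<in>{1..k}. 0 \<le> e i l"
    and esum: "\<forall>i\<in>{1..n}. (\<Sum>l=1..k. e i l) = 1"
    and hmin: "\<forall>\<theta>. KLd n k e (gtheta n k p h \<theta>s) \<le> KLd n k e (gtheta n k p h \<theta>)"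
  shows "(\<Sum>i=1..n. \<Sum>l=1..k. atheta n k p h v i l * gtheta n k p h \<theta>s i l)
       = (\<Sum>i=1..n. \<Sum>l=1..k. atheta n k p h v i l * e i l)"
proof -
  define a where "a = atheta n k p h \<theta>s"
  define c where "c = atheta n k p h v"
  define K where "K = (\<Sum>i=1..n. \<Sum>l=1..k. phi (e i l)) - (\<Sum>i=1..n. \<Sum>l=1..k. a i l * e i l)"
  define B where "B = (\<Sum>i=1..n. \<Sum>l=1..k. c i l * e i l)"
  define E where "E s = K - s * B + (\<Sum>i=1..n. ln (\<Sum>l=1..k. exp (a i l + s * c i l)))" for s
  have Eeq: "KLd n k e (gtheta n k p h (\<lambda>j. \<theta>s j + s * v j)) = E s" for s
  proof -
    have "(\<Sum>i=1..n. \<Sum>l=1..k. atheta n k p h (\<lambda>j. \<theta>s j + s * v j) i l * e i l)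
        = (\<Sum>i=1..n. \<Sum>l=1..k. a i l * e i l) + s * B"
      unfolding alin a_def[symmetric] c_def[symmetric] B_def
      by (simp add: distrib_right sum.distrib sum_distrib_left mult.assoc)
    thus ?thesis unfolding KL_G[OF k1 e0 esum] alin a_def[symmetric] c_def[symmetric] E_def K_def
      by simp
  qed
  have E0: "E 0 = KLd n k e (gtheta n k p h \<theta>s)"
    using Eeq[of 0] by simp
  have Emin: "E 0 \<le> E s" for s
    using hmin Eeq[of s] E0 by metis
  define D where "D = - B + (\<Sum>i=1..n. (\<Sum>l=1..k. exp (a i l) * c i l) / (\<Sum>l=1..k. exp (a i l)))"
  have Zp: "0 < (\<Sum>l=1..k. exp (a i l))" for i
    using k1 by (intro sum_pos) auto
  have "(E has_real_derivative D) (at 0)"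
    unfolding E_def D_def
    using Zp by (auto intro!: derivative_eq_intros)
  then have "D = 0"
    by (rule DERIV_local_min[of _ _ _ 1]) (use Emin in auto)
  moreover have "(\<Sum>i=1..n. \<Sum>l=1..k. c i l * gtheta n k p h \<theta>s i l)
      = (\<Sum>i=1..n. (\<Sum>l=1..k. exp (a i l) * c i l) / (\<Sum>l=1..k. exp (a i l)))"
    unfolding gtheta_def a_def[symmetric]
    by (intro sum.cong refl) (simp add: sum_divide_distrib mult.commute)
  ultimately show ?thesis unfolding D_def B_def c_def by simp
qed


theorem theorem4:
  fixes n k p :: nat
    and h :: "nat \<Rightarrow> nat \<Rightarrow> nat option"
    and \<eta> gbf :: "nat \<Rightarrow> nat \<Rightarrow> real"
    and b \<epsilon> \<theta>s :: "nat \<Rightarrow> real"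
  assumes hn: "n \<ge> 1" and hk: "k \<ge> 2" and hp: "p \<ge> 1"
    and hrules: "\<forall>j\<in>{1..p}. \<forall>i\<in>{1..n}. \<forall>l. h j i = Some l \<longrightarrow> l \<in> {1..k}"
    and hnj: "\<forall>j\<in>{1..p}. nrule n h j \<ge> 1"
    and heta: "simplex_prod n k \<eta>"
    and heps: "\<forall>j\<in>{1..p+k}. 0 \<le> \<epsilon> j"
    and hb: "\<forall>j\<in>{1..p+k}. b j - \<epsilon> j \<le> Aop n k p h \<eta> j \<and> Aop n k p h \<eta> j \<le> b j + \<epsilon> j"
    and hmin: "\<forall>\<theta>. KLd n k \<eta> (gtheta n k p h \<theta>s) \<le> KLd n k \<eta> (gtheta n k p h \<theta>)"
    and hbf: "is_maxent n k (polyP n k p h b \<epsilon>) gbf"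
  shows "KLd n k \<eta> gbf - KLd n k \<eta> (gtheta n k p h \<theta>s)
           \<le> 2 * (\<Sum>j=1..p+k. \<epsilon> j * \<bar>\<theta>s j\<bar>)
       \<and> 2 * (\<Sum>j=1..p+k. \<epsilon> j * \<bar>\<theta>s j\<bar>)
           \<le> 2 * Max ((\<lambda>j. \<bar>\<epsilon> j\<bar>) ` {1..p+k}) * (\<Sum>j=1..p+k. \<bar>\<theta>s j\<bar>)
       \<and> (in_G n k p h gbf \<longrightarrow>
            KLd n k \<eta> gbf - KLd n k \<eta> (gtheta n k p h \<theta>s) = KLd n k (gtheta n k p h \<theta>s) gbf
          \<and> KLd n k (gtheta n k p h \<theta>s) gbf \<le> 2 * (\<Sum>j=1..p+k. \<epsilon> j * \<bar>\<theta>s j\<bar>))"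
proof -
  have k1: "1 \<le> k" using hk by simp
  define q where "q = gtheta n k p h \<theta>s"
  define lz where "lz i = ln (\<Sum>l=1..k. exp (atheta n k p h \<theta>s i l))" for i
  have q0: "0 < q i l" for i l unfolding q_def by (rule G_pos[OF k1])
  have qsum: "(\<Sum>l=1..k. q i l) = 1" for i unfolding q_def by (rule G_sum[OF k1])
  have lnq: "ln (q i l) = atheta n k p h \<theta>s i l - lz i" for i l
    unfolding q_def lz_def by (rule G_ln[OF k1])
  have e0: "\<forall>i\<in>{1..n}. \<forall>l\<in>{1..k}. 0 \<le> \<eta> i l" and esum: "\<forall>i\<in>{1..n}. (\<Sum>l=1..k. \<eta> i l) = 1"
    using heta unfolding simplex_prod_def by auto
  have gP: "gbf \<in> polyP n k p h b \<epsilon>" and gopt: "\<forall>w\<in>polyP n k p h b \<epsilon>. negent n k gbf \<le> negent n k w"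
    using hbf unfolding is_maxent_def by auto
  have g0: "\<forall>i\<in>{1..n}. \<forall>l\<in>{1..k}. 0 \<le> gbf i l" and gsum: "\<forall>i\<in>{1..n}. (\<Sum>l=1..k. gbf i l) = 1"
    and gA: "\<forall>j\<in>{1..p+k}. b j - \<epsilon> j \<le> Aop n k p h gbf j \<and> Aop n k p h gbf j \<le> b j + \<epsilon> j"
    using gP unfolding polyP_def simplex_prod_def by auto
  have mv: "(\<forall>i\<in>{1..n}. \<forall>l\<in>{1..k}. 0 < \<eta> i l \<longrightarrow> 0 < gbf i l) \<and>
         (\<Sum>i\<in>{1..n}. \<Sum>l\<in>{1..k}. phi (gbf i l))
           \<le> (\<Sum>i\<in>{1..n}. \<Sum>l\<in>{1..k}. if gbf i l = 0 then 0 else \<eta> i l * ln (gbf i l))"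
  proof (rule maxent_var)
    show "finite {1..n}" "finite {1..k}" by auto
    show "\<forall>i\<in>{1..n}. \<forall>l\<in>{1..k}. 0 \<le> gbf i l" by (rule g0)
    show "\<forall>i\<in>{1..n}. \<forall>l\<in>{1..k}. 0 \<le> \<eta> i l" by (rule e0)
    show "(\<Sum>i\<in>{1..n}. \<Sum>l\<in>{1..k}. gbf i l) = (\<Sum>i\<in>{1..n}. \<Sum>l\<in>{1..k}. \<eta> i l)"
      using gsum esum by simp
  next
    fix t :: real assume t: "0 < t" "t < 1"
    define z where "z = (\<lambda>i l. (1-t) * gbf i l + t * \<eta> i l)"
    have "simplex_prod n k z"
      unfolding simplex_prod_def
    proof (intro ballI conjI)
      fix i l assume "i \<in> {1..n}" "l \<in> {1..k}"
      thus "0 \<le> z i l" using g0 e0 t unfolding z_def by auto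
    next
      fix i assume i: "i \<in> {1..n}"
      have "(\<Sum>l=1..k. z i l) = (1-t) * (\<Sum>l=1..k. gbf i l) + t * (\<Sum>l=1..k. \<eta> i l)"
        unfolding z_def by (simp add: sum.distrib sum_distrib_left)
      thus "(\<Sum>l=1..k. z i l) = 1" using gsum esum i by simp
    qed
    moreover have "\<forall>j\<in>{1..p+k}. b j - \<epsilon> j \<le> Aop n k p h z j \<and> Aop n k p h z j \<le> b j + \<epsilon> j"
    proof
      fix j assume j: "j \<in> {1..p+k}"
      show "b j - \<epsilon> j \<le> Aop n k p h z j \<and> Aop n k p h z j \<le> b j + \<epsilon> j"
        unfolding z_def Aop_lin
        by (rule conv) (use gA hb j t in auto)
    qed
    ultimately have "z \<in> polyP n k p h b \<epsilon>" unfolding polyP_def by simp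
    then have "negent n k gbf \<le> negent n k z" using gopt by blast
    thus "(\<Sum>i\<in>{1..n}. \<Sum>l\<in>{1..k}. phi (gbf i l))
          \<le> (\<Sum>i\<in>{1..n}. \<Sum>l\<in>{1..k}. phi ((1-t) * gbf i l + t * \<eta> i l))"
      unfolding negent_phi z_def by simp
  qed
  have gpos: "\<forall>i\<in>{1..n}. \<forall>l\<in>{1..k}. 0 < \<eta> i l \<longrightarrow> 0 < gbf i l" using mv by blast
  have KLg: "KLd n k \<eta> gbf = (\<Sum>i=1..n. \<Sum>l=1..k. phi (\<eta> i l))
           - (\<Sum>i=1..n. \<Sum>l=1..k. if \<eta> i l = 0 then 0 else \<eta> i l * ln (gbf i l))"
    using e0 gpos by (intro KL_split) auto
  have KLq: "KLd n k \<eta> q = (\<Sum>i=1..n. \<Sum>l=1..k. phi (\<eta> i l))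
           - (\<Sum>i=1..n. \<Sum>l=1..k. if \<eta> i l = 0 then 0 else \<eta> i l * ln (q i l))"
    using e0 q0 by (intro KL_split) auto
  have Eg: "(\<Sum>i=1..n. \<Sum>l=1..k. if \<eta> i l = 0 then 0 else \<eta> i l * ln (gbf i l))
          = (\<Sum>i=1..n. \<Sum>l=1..k. if gbf i l = 0 then 0 else \<eta> i l * ln (gbf i l))"
  proof (intro sum.cong refl)
    fix i l assume il: "i \<in> {1..n}" "l \<in> {1..k}"
    show "(if \<eta> i l = 0 then 0 else \<eta> i l * ln (gbf i l)) = (if gbf i l = 0 then 0 else \<eta> i l * ln (gbf i l))"
      using gpos e0 il by force
  qed
  have Eq: "(\<Sum>i=1..n. \<Sum>l=1..k. if \<eta> i l = 0 then 0 else \<eta> i l * ln (q i l))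
          = (\<Sum>i=1..n. \<Sum>l=1..k. \<eta> i l * ln (q i l))"
    by (intro sum.cong refl) simp
  have gibbs: "(\<Sum>i=1..n. \<Sum>l=1..k. gbf i l * ln (q i l)) \<le> (\<Sum>i=1..n. \<Sum>l=1..k. phi (gbf i l))"
  proof -
    have "(\<Sum>i=1..n. \<Sum>l=1..k. gbf i l * ln (q i l))
        = (\<Sum>i=1..n. \<Sum>l=1..k. gbf i l * ln (q i l) + gbf i l - q i l)"
    proof (rule sum.cong[OF refl])
      fix i assume i: "i \<in> {1..n}"
      have "(\<Sum>l=1..k. gbf i l * ln (q i l) + gbf i l - q i l)
          = (\<Sum>l=1..k. gbf i l * ln (q i l)) + (\<Sum>l=1..k. gbf i l) - (\<Sum>l=1..k. q i l)"
        by (simp add: sum.distrib sum_subtractf)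
      thus "(\<Sum>l=1..k. gbf i l * ln (q i l)) = (\<Sum>l=1..k. gbf i l * ln (q i l) + gbf i l - q i l)"
        using gsum i qsum by simp
    qed
    also have "\<dots> \<le> (\<Sum>i=1..n. \<Sum>l=1..k. phi (gbf i l))"
      by (intro sum_mono phi_ge q0) (use g0 in auto)
    finally show ?thesis .
  qed
  have diff1: "KLd n k \<eta> gbf - KLd n k \<eta> q
       \<le> (\<Sum>i=1..n. \<Sum>l=1..k. \<eta> i l * ln (q i l)) - (\<Sum>i=1..n. \<Sum>l=1..k. gbf i l * ln (q i l))"
    using KLg KLq Eg Eq gibbs mv by simp
  have lin1: "(\<Sum>i=1..n. \<Sum>l=1..k. \<eta> i l * ln (q i l)) - (\<Sum>i=1..n. \<Sum>l=1..k. gbf i l * ln (q i l))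
      = (\<Sum>j=1..p+k. \<theta>s j * (Aop n k p h \<eta> j - Aop n k p h gbf j))"
  proof -
    have "(\<Sum>i=1..n. \<Sum>l=1..k. \<eta> i l * ln (q i l)) - (\<Sum>i=1..n. \<Sum>l=1..k. gbf i l * ln (q i l))
       = (\<Sum>i=1..n. (\<Sum>l=1..k. \<eta> i l * ln (q i l)) - (\<Sum>l=1..k. gbf i l * ln (q i l)))"
      by (rule sum_subtractf[symmetric])
    also have "\<dots> = (\<Sum>i=1..n. ((\<Sum>l=1..k. atheta n k p h \<theta>s i l * \<eta> i l) - lz i)
                   - ((\<Sum>l=1..k. atheta n k p h \<theta>s i l * gbf i l) - lz i))"
      unfolding lnq
    proof (rule sum.cong[OF refl])
      fix i assume i: "i \<in> {1..n}"
      show "(\<Sum>l=1..k. \<eta> i l * (atheta n k p h \<theta>s i l - lz i)) - (\<Sum>l=1..k. gbf i l * (atheta n k p h \<theta>s i l - lz i))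
        = ((\<Sum>l=1..k. atheta n k p h \<theta>s i l * \<eta> i l) - lz i) - ((\<Sum>l=1..k. atheta n k p h \<theta>s i l * gbf i l) - lz i)"
      proof -
        have w1: "(\<Sum>l=1..k. \<eta> i l * (atheta n k p h \<theta>s i l - lz i)) = (\<Sum>l=1..k. atheta n k p h \<theta>s i l * \<eta> i l) - lz i"
          by (rule wsum) (use esum i in simp)
        have w2: "(\<Sum>l=1..k. gbf i l * (atheta n k p h \<theta>s i l - lz i)) = (\<Sum>l=1..k. atheta n k p h \<theta>s i l * gbf i l) - lz i"
          by (rule wsum) (use gsum i in simp)
        show ?thesis unfolding w1 w2 ..
      qed
    qed
    also have "\<dots> = (\<Sum>i=1..n. \<Sum>l=1..k. atheta n k p h \<theta>s i l * \<eta> i l)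
                  - (\<Sum>i=1..n. \<Sum>l=1..k. atheta n k p h \<theta>s i l * gbf i l)"
      by (simp add: sum_subtractf)
    also have "\<dots> = (\<Sum>j=1..p+k. \<theta>s j * Aop n k p h \<eta> j) - (\<Sum>j=1..p+k. \<theta>s j * Aop n k p h gbf j)"
      unfolding swapA ..
    also have "\<dots> = (\<Sum>j=1..p+k. \<theta>s j * (Aop n k p h \<eta> j - Aop n k p h gbf j))"
      by (simp add: sum_subtractf right_diff_distrib)
    finally show ?thesis .
  qed
  have bnd: "(\<Sum>j=1..p+k. \<theta>s j * (Aop n k p h \<eta> j - Aop n k p h gbf j)) \<le> 2 * (\<Sum>j=1..p+k. \<epsilon> j * \<bar>\<theta>s j\<bar>)"
  proof -
    have "(\<Sum>j=1..p+k. \<theta>s j * (Aop n k p h \<eta> j - Aop n k p h gbf j)) \<le> (\<Sum>j=1..p+k. 2 * (\<epsilon> j * \<bar>\<theta>s j\<bar>))"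
    proof (rule sum_mono)
      fix j assume j: "j \<in> {1..p+k}"
      have d: "\<bar>Aop n k p h \<eta> j - Aop n k p h gbf j\<bar> \<le> 2 * \<epsilon> j" using hb gA j by fastforce
      have "\<theta>s j * (Aop n k p h \<eta> j - Aop n k p h gbf j) \<le> \<bar>\<theta>s j\<bar> * \<bar>Aop n k p h \<eta> j - Aop n k p h gbf j\<bar>"
        by (metis abs_ge_self abs_mult)
      also have "\<dots> \<le> \<bar>\<theta>s j\<bar> * (2 * \<epsilon> j)" by (rule mult_left_mono[OF d]) simp
      finally show "\<theta>s j * (Aop n k p h \<eta> j - Aop n k p h gbf j) \<le> 2 * (\<epsilon> j * \<bar>\<theta>s j\<bar>)"
        by (simp add: mult_ac)
    qed
    thus ?thesis by (simp add: sum_distrib_left)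
  qed
  have C1: "KLd n k \<eta> gbf - KLd n k \<eta> q \<le> 2 * (\<Sum>j=1..p+k. \<epsilon> j * \<bar>\<theta>s j\<bar>)"
    using diff1 lin1 bnd by linarith
  have C2: "2 * (\<Sum>j=1..p+k. \<epsilon> j * \<bar>\<theta>s j\<bar>)
           \<le> 2 * Max ((\<lambda>j. \<bar>\<epsilon> j\<bar>) ` {1..p+k}) * (\<Sum>j=1..p+k. \<bar>\<theta>s j\<bar>)"
  proof -
    have "(\<Sum>j=1..p+k. \<epsilon> j * \<bar>\<theta>s j\<bar>) \<le> (\<Sum>j=1..p+k. Max ((\<lambda>j. \<bar>\<epsilon> j\<bar>) ` {1..p+k}) * \<bar>\<theta>s j\<bar>)"
    proof (rule sum_mono)
      fix j assume j: "j \<in> {1..p+k}"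
      have "\<epsilon> j \<le> Max ((\<lambda>j. \<bar>\<epsilon> j\<bar>) ` {1..p+k})"
        using j by (meson Max_ge abs_ge_self finite_atLeastAtMost finite_imageI image_eqI order_trans)
      thus "\<epsilon> j * \<bar>\<theta>s j\<bar> \<le> Max ((\<lambda>j. \<bar>\<epsilon> j\<bar>) ` {1..p+k}) * \<bar>\<theta>s j\<bar>"
        by (rule mult_right_mono) simp
    qed
    thus ?thesis by (simp add: sum_distrib_left[symmetric])
  qed
  have C3: "KLd n k \<eta> gbf - KLd n k \<eta> q = KLd n k q gbf" if inG: "in_G n k p h gbf"
  proof -
    obtain \<theta>' where th: "\<forall>i\<in>{1..n}. \<forall>l\<in>{1..k}. gbf i l = gtheta n k p h \<theta>' i l"
      using inG unfolding in_G_def by blast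
    define g' where "g' = gtheta n k p h \<theta>'"
    define lz' where "lz' i = ln (\<Sum>l=1..k. exp (atheta n k p h \<theta>' i l))" for i
    define v where "v j = \<theta>' j - \<theta>s j" for j
    have g'0: "0 < g' i l" for i l unfolding g'_def by (rule G_pos[OF k1])
    have lng': "ln (g' i l) = atheta n k p h \<theta>' i l - lz' i" for i l
      unfolding g'_def lz'_def by (rule G_ln[OF k1])
    have av: "atheta n k p h \<theta>' i l = atheta n k p h \<theta>s i l + atheta n k p h v i l" for i l
      using alin[of n k p h \<theta>s 1 v i l] unfolding v_def by simp
    have mom: "(\<Sum>i=1..n. \<Sum>l=1..k. atheta n k p h v i l * q i l)
       = (\<Sum>i=1..n. \<Sum>l=1..k. atheta n k p h v i l * \<eta> i l)"
      unfolding q_def by (rule moment[OF k1 e0 esum hmin])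
    have KLeg: "KLd n k \<eta> gbf = KLd n k \<eta> g'"
      unfolding KLd_def g'_def using th by (intro sum.cong refl) auto
    have Kqg: "KLd n k q gbf = KLd n k q g'"
      unfolding KLd_def g'_def using th by (intro sum.cong refl) auto
    have Ke: "KLd n k \<eta> g' - KLd n k \<eta> q
        = (\<Sum>i=1..n. \<Sum>l=1..k. \<eta> i l * (ln (q i l) - ln (g' i l)))"
    proof -
      have "KLd n k \<eta> g' = (\<Sum>i=1..n. \<Sum>l=1..k. phi (\<eta> i l))
           - (\<Sum>i=1..n. \<Sum>l=1..k. if \<eta> i l = 0 then 0 else \<eta> i l * ln (g' i l))"
        using e0 g'0 by (intro KL_split) auto
      moreover have "(\<Sum>i=1..n. \<Sum>l=1..k. if \<eta> i l = 0 then 0 else \<eta> i l * ln (g' i l))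
          = (\<Sum>i=1..n. \<Sum>l=1..k. \<eta> i l * ln (g' i l))"
        by (intro sum.cong refl) simp
      ultimately show ?thesis using KLq Eq by (simp add: sum_subtractf right_diff_distrib)
    qed
    have Kq: "KLd n k q g' = (\<Sum>i=1..n. \<Sum>l=1..k. q i l * (ln (q i l) - ln (g' i l)))"
    proof -
      have "KLd n k q g' = (\<Sum>i=1..n. \<Sum>l=1..k. phi (q i l))
           - (\<Sum>i=1..n. \<Sum>l=1..k. if q i l = 0 then 0 else q i l * ln (g' i l))"
        using q0 g'0 by (intro KL_split) (auto intro: less_imp_le)
      moreover have "(\<Sum>i=1..n. \<Sum>l=1..k. if q i l = 0 then 0 else q i l * ln (g' i l))
          = (\<Sum>i=1..n. \<Sum>l=1..k. q i l * ln (g' i l))"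
        by (intro sum.cong refl) simp
      moreover have "(\<Sum>i=1..n. \<Sum>l=1..k. phi (q i l)) = (\<Sum>i=1..n. \<Sum>l=1..k. q i l * ln (q i l))"
        by (intro sum.cong refl) (simp add: phi_def)
      ultimately show ?thesis by (simp add: sum_subtractf right_diff_distrib)
    qed
    have "(\<Sum>i=1..n. \<Sum>l=1..k. \<eta> i l * (ln (q i l) - ln (g' i l)))
        = (\<Sum>i=1..n. \<Sum>l=1..k. q i l * (ln (q i l) - ln (g' i l)))"
    proof -
      have r: "ln (q i l) - ln (g' i l) = (lz' i - lz i) - atheta n k p h v i l" for i l
        unfolding lnq lng' av by simp
      have "(\<Sum>i=1..n. \<Sum>l=1..k. \<eta> i l * (ln (q i l) - ln (g' i l)))
          = (\<Sum>i=1..n. (lz' i - lz i) - (\<Sum>l=1..k. atheta n k p h v i l * \<eta> i l))"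
        unfolding r
      proof (rule sum.cong[OF refl])
        fix i assume i: "i \<in> {1..n}"
        have "(\<Sum>l=1..k. \<eta> i l * (lz' i - lz i - atheta n k p h v i l))
            = (lz' i - lz i) * (\<Sum>l=1..k. \<eta> i l) - (\<Sum>l=1..k. atheta n k p h v i l * \<eta> i l)"
          by (simp add: right_diff_distrib sum_subtractf sum_distrib_left mult_ac)
        thus "(\<Sum>l=1..k. \<eta> i l * (lz' i - lz i - atheta n k p h v i l))
            = (lz' i - lz i) - (\<Sum>l=1..k. atheta n k p h v i l * \<eta> i l)" using esum i by simp
      qed
      also have "\<dots> = (\<Sum>i=1..n. (lz' i - lz i)) - (\<Sum>i=1..n. \<Sum>l=1..k. atheta n k p h v i l * \<eta> i l)"
        by (simp add: sum_subtractf)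
      also have "\<dots> = (\<Sum>i=1..n. (lz' i - lz i)) - (\<Sum>i=1..n. \<Sum>l=1..k. atheta n k p h v i l * q i l)"
        using mom by simp
      also have "\<dots> = (\<Sum>i=1..n. (lz' i - lz i) - (\<Sum>l=1..k. atheta n k p h v i l * q i l))"
        by (simp add: sum_subtractf)
      also have "\<dots> = (\<Sum>i=1..n. \<Sum>l=1..k. q i l * (ln (q i l) - ln (g' i l)))"
        unfolding r
      proof (rule sum.cong[OF refl])
        fix i assume i: "i \<in> {1..n}"
        have "(\<Sum>l=1..k. q i l * (lz' i - lz i - atheta n k p h v i l))
            = (lz' i - lz i) * (\<Sum>l=1..k. q i l) - (\<Sum>l=1..k. atheta n k p h v i l * q i l)"
          by (simp add: right_diff_distrib sum_subtractf sum_distrib_left mult_ac)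
        thus "(lz' i - lz i) - (\<Sum>l=1..k. atheta n k p h v i l * q i l)
            = (\<Sum>l=1..k. q i l * (lz' i - lz i - atheta n k p h v i l))" using qsum by simp
      qed
      finally show ?thesis .
    qed
    thus ?thesis using KLeg Kqg Ke Kq by simp
  qed
  show ?thesis using C1 C2 C3 unfolding q_def by (metis mult_le_cancel_left_pos zero_less_numeral mult.assoc)
qed

end
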